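(* Let $V_1,V_2$ satisfy (C1), (C2) below, let $v$ and the Markov chain $(Y_n)_{n\ge0}$ under $\mathbf{P}^{(0,0)}$ be as described below. There exists a constant $C\in(0,\infty)$ such that for all $n\in\mathbb{N}$, $$\mathbf{E}^{(0,0)}\big(|Y_n|\big)\le C,\qquad \mathbf{E}^{(0,0)}\Big(\frac{1}{v(Y_n)}\Big)\le C.$$
   Context: Assumptions: (C1) $V_1:\mathbb{R}\to\mathbb{R}$ measurable, bounded from below, symmetric, $\lim_{|x|\to\infty}V_1(x)=+\infty$, $\int e^{-2V_1}<\infty$; (C2) $V_2:\mathbb{R}\to\mathbb{R}$ measurable, bounded from below, bounded above on $[-\gamma,\gamma]$ for some $\gamma>0$, $\int|x|e^{-V_2(x)}dx<\infty$. $k(x,y)=e^{-V_1(y)-V_2(y-x)}$; $\lambda>0$ is the spectral radius of $(\mathcal{K}f)(x)=\int k(x,y)f(y)dy$ on $L^2(\mathbb{R})$ and $v\in L^2(\mathbb{R})$ is a right eigenfunction with $v(x)>0$ and $v(x)=\lambda^{-1}\int k(x,y)v(y)dy$ for all $x$. Under $\mathbf{P}^{(0,0)}$, $(Y_n)$ is the Markov chain on $\mathbb{R}$ with $Y_0=0$ and transition density $p(x,y)=k(x,y)v(y)/(\lambda v(x))$. *)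

theory Defs
  imports "HOL-Analysis.Analysis"
begin

definition L2 :: "(real \<Rightarrow> real) \<Rightarrow> bool" where
  "L2 f \<longleftrightarrow> f \<in> borel_measurable lborel \<and> integrable lborel (\<lambda>x. (f x)\<^sup>2)"

definition l2norm :: "(real \<Rightarrow> real) \<Rightarrow> real" where
  "l2norm f = sqrt (\<integral>x. (f x)\<^sup>2 \<partial>lborel)"

definition kernel_op :: "(real \<Rightarrow> real \<Rightarrow> real) \<Rightarrow> (real \<Rightarrow> real) \<Rightarrow> real \<Rightarrow> real" where
  "kernel_op k f x = (\<integral>y. k x y * f y \<partial>lborel)"

definition opnorm_L2 :: "((real \<Rightarrow> real) \<Rightarrow> (real \<Rightarrow> real)) \<Rightarrow> real" where
  "opnorm_L2 T = Sup {l2norm (T f) | f. L2 f \<and> l2norm f \<le> 1}"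

text \<open>Spectral radius on L^2, via Gelfand's formula r(T) = lim ||T^n||^(1/n).\<close>
definition spectral_radius_L2 :: "((real \<Rightarrow> real) \<Rightarrow> (real \<Rightarrow> real)) \<Rightarrow> real" where
  "spectral_radius_L2 T = lim (\<lambda>n. root (Suc n) (opnorm_L2 (T ^^ Suc n)))"

text \<open>Expectation E^x(f(Y_n)) for a Markov chain on R with transition density p,
  for nonnegative f: iterated one-step integration (P^n f)(x).\<close>
fun chain_expect :: "(real \<Rightarrow> real \<Rightarrow> real) \<Rightarrow> nat \<Rightarrow> (real \<Rightarrow> ennreal) \<Rightarrow> real \<Rightarrow> ennreal" where
  "chain_expect p 0 f x = f x"
| "chain_expect p (Suc n) f x = (\<integral>\<^sup>+ y. ennreal (p x y) * chain_expect p n f y \<partial>lborel)"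

end

theory Submission
  imports Defs
begin


locale dsetup =
  fixes V1 V2 v :: "real \<Rightarrow> real" and lam \<gamma> c1 c2 Cg :: real
  assumes V1m[measurable]: "V1 \<in> borel_measurable borel"
    and V2m[measurable]: "V2 \<in> borel_measurable borel"
    and vm[measurable]: "v \<in> borel_measurable borel"
    and c1: "\<And>x. c1 \<le> V1 x"
    and c2: "\<And>x. c2 \<le> V2 x"
    and gpos: "\<gamma> > 0"
    and Cg: "\<And>x. x \<in> {-\<gamma>..\<gamma>} \<Longrightarrow> V2 x \<le> Cg"
    and V1inf: "filterlim V1 at_top at_infinity"
    and V1int: "integrable lborel (\<lambda>x. exp (- 2 * V1 x))"
    and V2int: "integrable lborel (\<lambda>x. \<bar>x\<bar> * exp (- V2 x))"
    and lampos: "lam > 0"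
    and vpos: "\<And>x. v x > 0"
    and v2int: "integrable lborel (\<lambda>x. (v x)\<^sup>2)"
    and veig: "\<And>x. v x = (1 / lam) * (\<integral>y. exp (- V1 y - V2 (y - x)) * v y \<partial>lborel)"
begin

lemma a_le: "exp (- V1 y) \<le> exp (- c1)" using c1[of y] by simp
lemma b_le: "exp (- V2 y) \<le> exp (- c2)" using c2[of y] by simp

lemma wb_fin: "(\<integral>\<^sup>+w. ennreal (\<bar>w\<bar> * exp (- V2 w)) \<partial>lborel) < \<infinity>"
  using integrableD(2)[OF V2int] by (simp add: top.not_eq_extremum)

lemma b_fin: "(\<integral>\<^sup>+w. ennreal (exp (- V2 w)) \<partial>lborel) < \<infinity>"
proof -
  have "(\<integral>\<^sup>+w. ennreal (exp (- V2 w)) \<partial>lborel) \<le>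
    (\<integral>\<^sup>+w. ennreal (exp (- c2)) * indicator {-1..1} w + ennreal (\<bar>w\<bar> * exp (- V2 w)) \<partial>lborel)"
  proof (rule nn_integral_mono)
    fix w
    show "ennreal (exp (- V2 w)) \<le> ennreal (exp (- c2)) * indicator {-1..1} w + ennreal (\<bar>w\<bar> * exp (- V2 w))"
    proof (cases "w \<in> {-1..1}")
      case True
      then show ?thesis using b_le[of w] by (simp add: add_increasing2)
    next
      case False
      then have "1 \<le> \<bar>w\<bar>" by auto
      then have "exp (- V2 w) \<le> \<bar>w\<bar> * exp (- V2 w)" by simp
      then show ?thesis using False by simp
    qed
  qed
  also have "\<dots> = ennreal (exp (- c2)) * 2 + (\<integral>\<^sup>+w. ennreal (\<bar>w\<bar> * exp (- V2 w)) \<partial>lborel)"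
    by (subst nn_integral_add) (auto simp: nn_integral_cmult_indicator)
  also have "\<dots> < \<infinity>" using wb_fin by (simp add: ennreal_mult_less_top)
  finally show ?thesis .
qed

lemma h_fin: "(\<integral>\<^sup>+y. ennreal (exp (- V1 y) * v y) \<partial>lborel) < \<infinity>"
proof -
  have "(\<integral>\<^sup>+y. ennreal (exp (- V1 y) * v y) \<partial>lborel) \<le>
    (\<integral>\<^sup>+y. ennreal (exp (- 2 * V1 y)) + ennreal ((v y)\<^sup>2) \<partial>lborel)"
  proof (rule nn_integral_mono)
    fix y
    have e: "exp (- 2 * V1 y) = exp (- V1 y) * exp (- V1 y)" by (simp add: exp_add[symmetric])
    have "0 \<le> (exp (- V1 y) - v y)\<^sup>2" by simp
    then have "exp (- V1 y) * v y \<le> exp (- 2 * V1 y) + (v y)\<^sup>2"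
      unfolding e power2_eq_square using vpos[of y]
      by (smt (verit) mult_nonneg_nonneg exp_gt_zero left_diff_distrib right_diff_distrib)
    then show "ennreal (exp (- V1 y) * v y) \<le> ennreal (exp (- 2 * V1 y)) + ennreal ((v y)\<^sup>2)"
      by (simp add: ennreal_plus[symmetric] del: ennreal_plus)
  qed
  also have "\<dots> = (\<integral>\<^sup>+y. ennreal (exp (- 2 * V1 y)) \<partial>lborel) + (\<integral>\<^sup>+y. ennreal ((v y)\<^sup>2) \<partial>lborel)"
    by (rule nn_integral_add) auto
  also have "\<dots> < \<infinity>" using integrableD(2)[OF V1int] integrableD(2)[OF v2int]
    by (simp add: top.not_eq_extremum)
  finally show ?thesis .
qed

lemma shift1:
  fixes f :: "real \<Rightarrow> ennreal"
  assumes [measurable]: "f \<in> borel_measurable borel"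
  shows "(\<integral>\<^sup>+y. f (y - x) \<partial>lborel) = (\<integral>\<^sup>+y. f y \<partial>lborel)"
  using nn_integral_real_affine[OF assms, of 1 "-x"] by simp

lemma shift2:
  fixes f :: "real \<Rightarrow> ennreal"
  assumes [measurable]: "f \<in> borel_measurable borel"
  shows "(\<integral>\<^sup>+y. f (x - y) \<partial>lborel) = (\<integral>\<^sup>+y. f y \<partial>lborel)"
  using nn_integral_real_affine[OF assms, of "-1" "x"] by simp

lemma eig: "ennreal (lam * v x) = (\<integral>\<^sup>+y. ennreal (exp (- V1 y) * exp (- V2 (y - x)) * v y) \<partial>lborel)"
proof -
  have fin: "(\<integral>\<^sup>+y. ennreal (exp (- V1 y - V2 (y - x)) * v y) \<partial>lborel) < \<infinity>"
  proof -
    have "(\<integral>\<^sup>+y. ennreal (exp (- V1 y - V2 (y - x)) * v y) \<partial>lborel) \<le>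
       (\<integral>\<^sup>+y. ennreal (exp (- c2)) * ennreal (exp (- V1 y) * v y) \<partial>lborel)"
    proof (rule nn_integral_mono)
      fix y
      have "exp (- V1 y - V2 (y - x)) * v y = exp (- V2 (y - x)) * (exp (- V1 y) * v y)"
        by (simp add: exp_diff exp_minus field_simps)
      also have "\<dots> \<le> exp (- c2) * (exp (- V1 y) * v y)"
        using b_le[of "y - x"] vpos[of y] by (intro mult_right_mono) auto
      finally show "ennreal (exp (- V1 y - V2 (y - x)) * v y) \<le> ennreal (exp (- c2)) * ennreal (exp (- V1 y) * v y)"
        using vpos[of y] by (subst ennreal_mult[symmetric]) (auto intro: ennreal_leI simp: less_imp_le)
    qed
    also have "\<dots> = ennreal (exp (- c2)) * (\<integral>\<^sup>+y. ennreal (exp (- V1 y) * v y) \<partial>lborel)"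
      by (rule nn_integral_cmult) auto
    also have "\<dots> < \<infinity>" using h_fin by (simp add: ennreal_mult_less_top)
    finally show ?thesis .
  qed
  have int: "integrable lborel (\<lambda>y. exp (- V1 y - V2 (y - x)) * v y)"
    by (rule integrableI_nonneg) (use fin vpos in \<open>auto intro!: less_imp_le\<close>)
  have "lam * v x = (\<integral>y. exp (- V1 y - V2 (y - x)) * v y \<partial>lborel)"
    using veig[of x] lampos by simp
  then have "ennreal (lam * v x) = (\<integral>\<^sup>+y. ennreal (exp (- V1 y - V2 (y - x)) * v y) \<partial>lborel)"
    using nn_integral_eq_integral[OF int] vpos by (simp add: less_imp_le)
  then show ?thesis by (simp add: exp_diff exp_minus field_simps)
qed

end



lemma nn_lin2:
  fixes F G :: "real \<Rightarrow> real"
  assumes [measurable]: "F \<in> borel_measurable borel" "G \<in> borel_measurable borel"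
    and "\<And>y. F y \<ge> 0" "\<And>y. G y \<ge> 0" "K \<ge> 0" "L \<ge> 0"
  shows "(\<integral>\<^sup>+y. ennreal (K * F y + L * G y) \<partial>lborel)
     = ennreal K * (\<integral>\<^sup>+y. ennreal (F y) \<partial>lborel) + ennreal L * (\<integral>\<^sup>+y. ennreal (G y) \<partial>lborel)"
proof -
  have "(\<integral>\<^sup>+y. ennreal (K * F y + L * G y) \<partial>lborel)
     = (\<integral>\<^sup>+y. ennreal K * ennreal (F y) + ennreal L * ennreal (G y) \<partial>lborel)"
    using assms by (intro nn_integral_cong) (simp add: ennreal_plus[symmetric] ennreal_mult[symmetric] del: ennreal_plus)
  also have "\<dots> = (\<integral>\<^sup>+y. ennreal K * ennreal (F y) \<partial>lborel) + (\<integral>\<^sup>+y. ennreal L * ennreal (G y) \<partial>lborel)"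
    by (rule nn_integral_add) auto
  also have "\<dots> = ennreal K * (\<integral>\<^sup>+y. ennreal (F y) \<partial>lborel) + ennreal L * (\<integral>\<^sup>+y. ennreal (G y) \<partial>lborel)"
    by (simp add: nn_integral_cmult)
  finally show ?thesis .
qed

context dsetup begin

definition "Gb = enn2real (\<integral>\<^sup>+w. ennreal (exp (- V2 w)) \<partial>lborel)"
definition "Jb = enn2real (\<integral>\<^sup>+w. ennreal (\<bar>w\<bar> * exp (- V2 w)) \<partial>lborel)"
definition "Hn = enn2real (\<integral>\<^sup>+y. ennreal (exp (- V1 y) * v y) \<partial>lborel)"

lemma Gb: "(\<integral>\<^sup>+w. ennreal (exp (- V2 w)) \<partial>lborel) = ennreal Gb" "Gb \<ge> 0"
  using b_fin unfolding Gb_def by auto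
lemma Jb: "(\<integral>\<^sup>+w. ennreal (\<bar>w\<bar> * exp (- V2 w)) \<partial>lborel) = ennreal Jb" "Jb \<ge> 0"
  using wb_fin unfolding Jb_def by auto
lemma Hn: "(\<integral>\<^sup>+y. ennreal (exp (- V1 y) * v y) \<partial>lborel) = ennreal Hn" "Hn \<ge> 0"
  using h_fin unfolding Hn_def by auto

lemma Q1_bound: "(\<integral>\<^sup>+y. ennreal (exp (- V1 y) * exp (- V2 (y - x))) \<partial>lborel) \<le> ennreal (exp (- c1) * Gb)"
proof -
  have "(\<integral>\<^sup>+y. ennreal (exp (- V1 y) * exp (- V2 (y - x))) \<partial>lborel) \<le>
      (\<integral>\<^sup>+y. ennreal (exp (- c1)) * ennreal (exp (- V2 (y - x))) \<partial>lborel)"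
    by (intro nn_integral_mono) (auto simp: ennreal_mult[symmetric] intro!: ennreal_leI mult_right_mono a_le c1)
  also have "\<dots> = ennreal (exp (- c1)) * (\<integral>\<^sup>+y. ennreal (exp (- V2 (y - x))) \<partial>lborel)"
    by (rule nn_integral_cmult) auto
  also have "\<dots> = ennreal (exp (- c1) * Gb)"
    using shift1[of "\<lambda>w. ennreal (exp (- V2 w))" x] Gb by (simp add: ennreal_mult)
  finally show ?thesis .
qed

lemma Q2_bound: "(\<integral>\<^sup>+y. ennreal (exp (- V1 y) * exp (- V2 (x - y))) \<partial>lborel) \<le> ennreal (exp (- c1) * Gb)"
proof -
  have "(\<integral>\<^sup>+y. ennreal (exp (- V1 y) * exp (- V2 (x - y))) \<partial>lborel) \<le>
      (\<integral>\<^sup>+y. ennreal (exp (- c1)) * ennreal (exp (- V2 (x - y))) \<partial>lborel)"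
    by (intro nn_integral_mono) (auto simp: ennreal_mult[symmetric] intro!: ennreal_leI mult_right_mono a_le c1)
  also have "\<dots> = ennreal (exp (- c1)) * (\<integral>\<^sup>+y. ennreal (exp (- V2 (x - y))) \<partial>lborel)"
    by (rule nn_integral_cmult) auto
  also have "\<dots> = ennreal (exp (- c1) * Gb)"
    using shift2[of "\<lambda>w. ennreal (exp (- V2 w))" x] Gb by (simp add: ennreal_mult)
  finally show ?thesis .
qed

lemma a_small: assumes "\<epsilon> > 0" shows "\<exists>r. \<forall>y. r \<le> \<bar>y\<bar> \<longrightarrow> exp (- V1 y) \<le> \<epsilon>"
proof -
  have "eventually (\<lambda>y. - ln \<epsilon> \<le> V1 y) at_infinity"
    using V1inf by (simp add: filterlim_at_top)
  then obtain r where r: "\<And>y. r \<le> norm y \<Longrightarrow> - ln \<epsilon> \<le> V1 y"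
    unfolding eventually_at_infinity by auto
  have "exp (- V1 y) \<le> \<epsilon>" if "r \<le> \<bar>y\<bar>" for y
  proof -
    have "- V1 y \<le> ln \<epsilon>" using r[of y] that by simp
    then have "exp (- V1 y) \<le> exp (ln \<epsilon>)" by simp
    then show ?thesis using assms by simp
  qed
  then show ?thesis by blast
qed

lemma pw:
  assumes R: "R > 0" "2 * r \<le> R" "R \<le> \<bar>x\<bar>" and r: "\<And>y. r \<le> \<bar>y\<bar> \<Longrightarrow> exp (- V1 y) \<le> \<epsilon>"
    and w: "\<bar>w\<bar> = \<bar>y - x\<bar>"
  shows "exp (- V1 y) * exp (- V2 w) \<le> (exp (- c1) * 2 / R) * (\<bar>w\<bar> * exp (- V2 w)) + \<epsilon> * exp (- V2 w)"
proof (cases "R / 2 \<le> \<bar>w\<bar>")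
  case True
  have "exp (- V1 y) * exp (- V2 w) \<le> exp (- c1) * exp (- V2 w)"
    by (intro mult_right_mono a_le) auto
  also have "\<dots> \<le> (exp (- c1) * 2 / R) * (\<bar>w\<bar> * exp (- V2 w))"
  proof -
    have "1 \<le> 2 * \<bar>w\<bar> / R" using True R by (simp add: field_simps)
    then have "exp (- c1) * exp (- V2 w) * 1 \<le> exp (- c1) * exp (- V2 w) * (2 * \<bar>w\<bar> / R)"
      by (intro mult_left_mono) auto
    then show ?thesis by (simp add: field_simps)
  qed
  finally show ?thesis
    by (smt (verit) exp_gt_zero mult_nonneg_nonneg r abs_ge_zero le_less_trans)
next
  case False
  then have "r \<le> \<bar>y\<bar>" using R w by linarith
  then have "exp (- V1 y) * exp (- V2 w) \<le> \<epsilon> * exp (- V2 w)"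
    using r by (intro mult_right_mono) auto
  moreover have "0 \<le> (exp (- c1) * 2 / R) * (\<bar>w\<bar> * exp (- V2 w))" using R by simp
  ultimately show ?thesis by linarith
qed

lemma Q_small: "\<exists>R>0. \<forall>x. R \<le> \<bar>x\<bar> \<longrightarrow>
   (\<integral>\<^sup>+y. ennreal (exp (- V1 y) * exp (- V2 (y - x))) \<partial>lborel) \<le> ennreal (lam / 2) \<and>
   (\<integral>\<^sup>+y. ennreal (exp (- V1 y) * exp (- V2 (x - y))) \<partial>lborel) \<le> ennreal (lam / 2)"
proof -
  define \<epsilon> where "\<epsilon> = lam / (4 * (Gb + 1))"
  have ep: "\<epsilon> > 0" using lampos Gb(2) unfolding \<epsilon>_def by simp
  obtain r where r: "\<And>y. r \<le> \<bar>y\<bar> \<Longrightarrow> exp (- V1 y) \<le> \<epsilon>" using a_small[OF ep] by blast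
  define R where "R = max (max (2 * r) 1) (8 * exp (- c1) * Jb / lam + 1)"
  have R: "R > 0" "2 * r \<le> R" "8 * exp (- c1) * Jb / lam + 1 \<le> R" unfolding R_def by auto
  define K where "K = exp (- c1) * 2 / R"
  have K: "K \<ge> 0" using R unfolding K_def by simp
  have KJ: "K * Jb + \<epsilon> * Gb \<le> lam / 2"
  proof -
    have "8 * exp (- c1) * Jb \<le> lam * R"
      using R(3) lampos by (simp add: field_simps)
    then have "K * Jb \<le> lam / 4" using R(1) unfolding K_def by (simp add: field_simps)
    moreover have "\<epsilon> * Gb \<le> lam / 4"
      using lampos Gb(2) unfolding \<epsilon>_def by (simp add: field_simps)
    ultimately show ?thesis by simp
  qed
  have "(\<integral>\<^sup>+y. ennreal (exp (- V1 y) * exp (- V2 (y - x))) \<partial>lborel) \<le> ennreal (lam / 2) \<and>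
   (\<integral>\<^sup>+y. ennreal (exp (- V1 y) * exp (- V2 (x - y))) \<partial>lborel) \<le> ennreal (lam / 2)" if x: "R \<le> \<bar>x\<bar>" for x
  proof
    have "(\<integral>\<^sup>+y. ennreal (exp (- V1 y) * exp (- V2 (y - x))) \<partial>lborel) \<le>
      (\<integral>\<^sup>+y. ennreal (K * (\<bar>y - x\<bar> * exp (- V2 (y - x))) + \<epsilon> * exp (- V2 (y - x))) \<partial>lborel)"
      by (intro nn_integral_mono ennreal_leI) (use pw[OF R(1,2) x r] in \<open>auto simp: K_def\<close>)
    also have "\<dots> = ennreal K * (\<integral>\<^sup>+y. ennreal (\<bar>y - x\<bar> * exp (- V2 (y - x))) \<partial>lborel)
        + ennreal \<epsilon> * (\<integral>\<^sup>+y. ennreal (exp (- V2 (y - x))) \<partial>lborel)"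
      by (rule nn_lin2) (use K ep in auto)
    also have "\<dots> = ennreal (K * Jb + \<epsilon> * Gb)"
      using shift1[of "\<lambda>w. ennreal (\<bar>w\<bar> * exp (- V2 w))" x] shift1[of "\<lambda>w. ennreal (exp (- V2 w))" x] Gb Jb K ep
      by (simp add: ennreal_mult ennreal_plus)
    also have "\<dots> \<le> ennreal (lam / 2)" using KJ by (rule ennreal_leI)
    finally show "(\<integral>\<^sup>+y. ennreal (exp (- V1 y) * exp (- V2 (y - x))) \<partial>lborel) \<le> ennreal (lam / 2)" .
  next
    have "(\<integral>\<^sup>+y. ennreal (exp (- V1 y) * exp (- V2 (x - y))) \<partial>lborel) \<le>
      (\<integral>\<^sup>+y. ennreal (K * (\<bar>x - y\<bar> * exp (- V2 (x - y))) + \<epsilon> * exp (- V2 (x - y))) \<partial>lborel)"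
      by (intro nn_integral_mono ennreal_leI) (use pw[OF R(1,2) x r] in \<open>auto simp: K_def abs_minus_commute\<close>)
    also have "\<dots> = ennreal K * (\<integral>\<^sup>+y. ennreal (\<bar>x - y\<bar> * exp (- V2 (x - y))) \<partial>lborel)
        + ennreal \<epsilon> * (\<integral>\<^sup>+y. ennreal (exp (- V2 (x - y))) \<partial>lborel)"
      by (rule nn_lin2) (use K ep in auto)
    also have "\<dots> = ennreal (K * Jb + \<epsilon> * Gb)"
      using shift2[of "\<lambda>w. ennreal (\<bar>w\<bar> * exp (- V2 w))" x] shift2[of "\<lambda>w. ennreal (exp (- V2 w))" x] Gb Jb K ep
      by (simp add: ennreal_mult ennreal_plus)
    also have "\<dots> \<le> ennreal (lam / 2)" using KJ by (rule ennreal_leI)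
    finally show "(\<integral>\<^sup>+y. ennreal (exp (- V1 y) * exp (- V2 (x - y))) \<partial>lborel) \<le> ennreal (lam / 2)" .
  qed
  then show ?thesis using R(1) by blast
qed

end



context dsetup begin

lemma IN_bound: "\<exists>M. \<forall>N::nat. (\<integral>\<^sup>+y. ennreal (min \<bar>y\<bar> (real N) * (exp (- V1 y) * v y)) \<partial>lborel) \<le> ennreal M"
proof -
  obtain R where R: "R > 0" and RQ: "\<And>x. R \<le> \<bar>x\<bar> \<Longrightarrow>
     (\<integral>\<^sup>+y. ennreal (exp (- V1 y) * exp (- V2 (x - y))) \<partial>lborel) \<le> ennreal (lam / 2)"
    using Q_small by blast
  define E1 where "E1 = exp (- c1)"
  have E1: "E1 > 0" unfolding E1_def by simp
  define Kc where "Kc = (R * E1 * Gb + E1 * Jb) / lam"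
  have Kc: "Kc \<ge> 0" unfolding Kc_def using R E1 Gb(2) Jb(2) lampos by simp
  have "(\<integral>\<^sup>+y. ennreal (min \<bar>y\<bar> (real N) * (exp (- V1 y) * v y)) \<partial>lborel) \<le> ennreal (2 * Kc * Hn)" for N :: nat
  proof -
    define m where "m y = min \<bar>y\<bar> (real N)" for y
    have m0: "m y \<ge> 0" for y unfolding m_def by simp
    have [measurable]: "m \<in> borel_measurable borel" unfolding m_def by measurable
    define IN where "IN = (\<integral>\<^sup>+y. ennreal (m y * (exp (- V1 y) * v y)) \<partial>lborel)"
    have step1: "ennreal (m y * (exp (- V1 y) * v y)) = (\<integral>\<^sup>+z. ennreal (m y * exp (- V1 y) / lam) *
        ennreal (exp (- V1 z) * exp (- V2 (z - y)) * v z) \<partial>lborel)" for y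
    proof -
      have "ennreal (m y * (exp (- V1 y) * v y)) = ennreal (m y * exp (- V1 y) / lam) * ennreal (lam * v y)"
        using lampos m0[of y] vpos[of y] by (simp add: ennreal_mult[symmetric] less_imp_le)
      also have "\<dots> = ennreal (m y * exp (- V1 y) / lam) * (\<integral>\<^sup>+z. ennreal (exp (- V1 z) * exp (- V2 (z - y)) * v z) \<partial>lborel)"
        by (simp add: eig)
      also have "\<dots> = (\<integral>\<^sup>+z. ennreal (m y * exp (- V1 y) / lam) *
        ennreal (exp (- V1 z) * exp (- V2 (z - y)) * v z) \<partial>lborel)"
        by (rule nn_integral_cmult[symmetric]) auto
      finally show ?thesis .
    qed
    have "IN = (\<integral>\<^sup>+y. \<integral>\<^sup>+z. ennreal (m y * exp (- V1 y) / lam) *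
        ennreal (exp (- V1 z) * exp (- V2 (z - y)) * v z) \<partial>lborel \<partial>lborel)"
      unfolding IN_def by (simp add: step1)
    also have "\<dots> = (\<integral>\<^sup>+z. \<integral>\<^sup>+y. ennreal (m y * exp (- V1 y) / lam) *
        ennreal (exp (- V1 z) * exp (- V2 (z - y)) * v z) \<partial>lborel \<partial>lborel)"
      by (rule lborel_pair.Fubini') measurable
    also have "\<dots> \<le> (\<integral>\<^sup>+z. ennreal ((1/2) * (m z * (exp (- V1 z) * v z)) + Kc * (exp (- V1 z) * v z)) \<partial>lborel)"
    proof (rule nn_integral_mono)
      fix z
      have az: "exp (- V1 z) * v z / lam \<ge> 0" using vpos[of z] lampos by (simp add: less_imp_le)
      have "(\<integral>\<^sup>+y. ennreal (m y * exp (- V1 y) / lam) *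
        ennreal (exp (- V1 z) * exp (- V2 (z - y)) * v z) \<partial>lborel) =
        (\<integral>\<^sup>+y. ennreal (exp (- V1 z) * v z / lam) * ennreal (m y * (exp (- V1 y) * exp (- V2 (z - y)))) \<partial>lborel)"
      proof (rule nn_integral_cong)
        fix y
        have "m y * exp (- V1 y) / lam * (exp (- V1 z) * exp (- V2 (z - y)) * v z)
          = exp (- V1 z) * v z / lam * (m y * (exp (- V1 y) * exp (- V2 (z - y))))" by (simp add: field_simps)
        then show "ennreal (m y * exp (- V1 y) / lam) * ennreal (exp (- V1 z) * exp (- V2 (z - y)) * v z) =
          ennreal (exp (- V1 z) * v z / lam) * ennreal (m y * (exp (- V1 y) * exp (- V2 (z - y))))"
          using m0[of y] lampos vpos[of z] az by (simp add: ennreal_mult[symmetric] less_imp_le)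
      qed
      also have "\<dots> = ennreal (exp (- V1 z) * v z / lam) * (\<integral>\<^sup>+y. ennreal (m y * (exp (- V1 y) * exp (- V2 (z - y)))) \<partial>lborel)"
        by (rule nn_integral_cmult) auto
      also have "(\<integral>\<^sup>+y. ennreal (m y * (exp (- V1 y) * exp (- V2 (z - y)))) \<partial>lborel) \<le>
          (\<integral>\<^sup>+y. ennreal (m z * (exp (- V1 y) * exp (- V2 (z - y))) + E1 * (\<bar>z - y\<bar> * exp (- V2 (z - y)))) \<partial>lborel)"
      proof (rule nn_integral_mono, rule ennreal_leI)
        fix y
        have "m y \<le> m z + \<bar>z - y\<bar>" unfolding m_def by auto
        then have "m y * (exp (- V1 y) * exp (- V2 (z - y))) \<le> (m z + \<bar>z - y\<bar>) * (exp (- V1 y) * exp (- V2 (z - y)))"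
          by (intro mult_right_mono) auto
        also have "\<dots> = m z * (exp (- V1 y) * exp (- V2 (z - y))) + \<bar>z - y\<bar> * exp (- V2 (z - y)) * exp (- V1 y)"
          by (simp add: field_simps)
        also have "\<dots> \<le> m z * (exp (- V1 y) * exp (- V2 (z - y))) + \<bar>z - y\<bar> * exp (- V2 (z - y)) * E1"
          unfolding E1_def by (intro add_left_mono mult_left_mono a_le) auto
        finally show "m y * (exp (- V1 y) * exp (- V2 (z - y))) \<le> m z * (exp (- V1 y) * exp (- V2 (z - y))) + E1 * (\<bar>z - y\<bar> * exp (- V2 (z - y)))"
          by (simp add: field_simps)
      qed
      also have "\<dots> = ennreal (m z) * (\<integral>\<^sup>+y. ennreal (exp (- V1 y) * exp (- V2 (z - y))) \<partial>lborel)
          + ennreal E1 * (\<integral>\<^sup>+y. ennreal (\<bar>z - y\<bar> * exp (- V2 (z - y))) \<partial>lborel)"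
        by (rule nn_lin2) (use m0 E1 in auto)
      also have "\<dots> = ennreal (m z) * (\<integral>\<^sup>+y. ennreal (exp (- V1 y) * exp (- V2 (z - y))) \<partial>lborel)
          + ennreal (E1 * Jb)"
        using shift2[of "\<lambda>w. ennreal (\<bar>w\<bar> * exp (- V2 w))" z] Jb E1 by (simp add: ennreal_mult)
      also have "\<dots> \<le> ennreal (m z * (lam / 2) + R * E1 * Gb) + ennreal (E1 * Jb)"
      proof (rule add_right_mono)
        show "ennreal (m z) * (\<integral>\<^sup>+y. ennreal (exp (- V1 y) * exp (- V2 (z - y))) \<partial>lborel) \<le> ennreal (m z * (lam / 2) + R * E1 * Gb)"
        proof (cases "R \<le> \<bar>z\<bar>")
          case True
          have "ennreal (m z) * (\<integral>\<^sup>+y. ennreal (exp (- V1 y) * exp (- V2 (z - y))) \<partial>lborel) \<le> ennreal (m z) * ennreal (lam / 2)"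
            by (intro mult_left_mono RQ True) auto
          also have "\<dots> \<le> ennreal (m z * (lam / 2) + R * E1 * Gb)"
            using m0[of z] lampos R E1 Gb(2) by (simp add: ennreal_mult[symmetric] ennreal_leI)
          finally show ?thesis .
        next
          case False
          have "ennreal (m z) * (\<integral>\<^sup>+y. ennreal (exp (- V1 y) * exp (- V2 (z - y))) \<partial>lborel) \<le> ennreal (m z) * ennreal (E1 * Gb)"
            unfolding E1_def by (intro mult_left_mono Q2_bound) auto
          also have "\<dots> \<le> ennreal (m z * (lam / 2) + R * E1 * Gb)"
          proof -
            have "m z \<le> R" using False unfolding m_def by auto
            then have h1: "m z * (E1 * Gb) \<le> R * (E1 * Gb)" using E1 Gb(2) by (intro mult_right_mono) auto
            have h2: "0 \<le> m z * (lam / 2)" using m0[of z] lampos by simp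
            have "m z * (E1 * Gb) \<le> m z * (lam / 2) + R * E1 * Gb" using h1 h2 by (simp add: mult.assoc)
            then show ?thesis using m0[of z] E1 Gb(2)
              by (subst ennreal_mult[symmetric]) (auto intro: ennreal_leI)
          qed
          finally show ?thesis .
        qed
      qed
      also have "\<dots> = ennreal (m z * (lam / 2) + R * E1 * Gb + E1 * Jb)"
        using m0[of z] lampos R E1 Gb(2) Jb(2) by (simp add: ennreal_plus[symmetric] del: ennreal_plus)
      finally have "(\<integral>\<^sup>+y. ennreal (m y * exp (- V1 y) / lam) *
        ennreal (exp (- V1 z) * exp (- V2 (z - y)) * v z) \<partial>lborel) \<le>
          ennreal (exp (- V1 z) * v z / lam) * ennreal (m z * (lam / 2) + R * E1 * Gb + E1 * Jb)"
        by (simp add: mult_left_mono)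
      also have "\<dots> = ennreal ((1/2) * (m z * (exp (- V1 z) * v z)) + Kc * (exp (- V1 z) * v z))"
      proof -
        have "exp (- V1 z) * v z / lam * (m z * (lam / 2) + R * E1 * Gb + E1 * Jb) =
          (1/2) * (m z * (exp (- V1 z) * v z)) + Kc * (exp (- V1 z) * v z)"
          unfolding Kc_def using lampos by (simp add: field_simps)
        moreover have nn: "0 \<le> m z * (lam / 2) + R * E1 * Gb + E1 * Jb"
          using m0[of z] lampos R E1 Gb(2) Jb(2) by simp
        ultimately show ?thesis by (simp only: ennreal_mult[OF az nn, symmetric])
      qed
      finally show "(\<integral>\<^sup>+y. ennreal (m y * exp (- V1 y) / lam) *
        ennreal (exp (- V1 z) * exp (- V2 (z - y)) * v z) \<partial>lborel) \<le>
        ennreal ((1/2) * (m z * (exp (- V1 z) * v z)) + Kc * (exp (- V1 z) * v z))" .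
    qed
    also have "\<dots> = ennreal (1/2) * IN + ennreal Kc * ennreal Hn"
      unfolding IN_def Hn(1)[symmetric]
      proof (rule nn_lin2)
      show "0 \<le> m z * (exp (- V1 z) * v z)" for z using m0[of z] vpos[of z] by simp
    qed (use vpos Kc in \<open>auto intro: less_imp_le\<close>)
    finally have IN1: "IN \<le> ennreal (1/2) * IN + ennreal Kc * ennreal Hn" .
    have "IN \<le> (\<integral>\<^sup>+y. ennreal (real N) * ennreal (exp (- V1 y) * v y) \<partial>lborel)"
      unfolding IN_def
    proof (rule nn_integral_mono)
      fix y
      have "m y * (exp (- V1 y) * v y) \<le> real N * (exp (- V1 y) * v y)"
        unfolding m_def using vpos[of y] by (intro mult_right_mono) auto
      then show "ennreal (m y * (exp (- V1 y) * v y)) \<le> ennreal (real N) * ennreal (exp (- V1 y) * v y)"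
        using vpos[of y] by (subst ennreal_mult[symmetric]) (auto intro: ennreal_leI less_imp_le)
    qed
    also have "\<dots> = ennreal (real N) * ennreal Hn" by (subst nn_integral_cmult) (auto simp: Hn)
    also have "\<dots> < \<infinity>" by (simp add: ennreal_mult_less_top)
    finally have "IN < \<infinity>" .
    then obtain x where x: "IN = ennreal x" "x \<ge> 0" by (cases IN) auto
    have e1: "ennreal (1/2) * ennreal x = ennreal (1/2 * x)" using x(2) by (rule ennreal_mult[symmetric, rotated]) simp
    have e2: "ennreal Kc * ennreal Hn = ennreal (Kc * Hn)" using Kc Hn(2) by (rule ennreal_mult[symmetric])
    have e3: "ennreal (1/2 * x) + ennreal (Kc * Hn) = ennreal (1/2 * x + Kc * Hn)"
      using x(2) Kc Hn(2) by (intro ennreal_plus[symmetric]) auto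
    have "ennreal x \<le> ennreal (1/2 * x + Kc * Hn)"
      using IN1 unfolding x(1) e1 e2 e3 .
    then have "x \<le> 1/2 * x + Kc * Hn" using x Kc Hn(2) by (subst (asm) ennreal_le_iff) auto
    then have "x \<le> 2 * Kc * Hn" by simp
    then show ?thesis unfolding IN_def[symmetric] m_def[symmetric] using x by (simp add: ennreal_leI)
  qed
  then show ?thesis by blast
qed

lemma I_fin: "\<exists>M. (\<integral>\<^sup>+y. ennreal (\<bar>y\<bar> * (exp (- V1 y) * v y)) \<partial>lborel) \<le> ennreal M"
proof -
  obtain M where M: "\<And>N::nat. (\<integral>\<^sup>+y. ennreal (min \<bar>y\<bar> (real N) * (exp (- V1 y) * v y)) \<partial>lborel) \<le> ennreal M"
    using IN_bound by blast
  define f where "f N y = ennreal (min \<bar>y\<bar> (real N) * (exp (- V1 y) * v y))" for N :: nat and y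
  have inc: "incseq f"
  proof (rule incseq_SucI, rule le_funI)
    fix N y
    have "min \<bar>y\<bar> (real N) * (exp (- V1 y) * v y) \<le> min \<bar>y\<bar> (real (Suc N)) * (exp (- V1 y) * v y)"
      using vpos[of y] by (intro mult_right_mono) auto
    then show "f N y \<le> f (Suc N) y" unfolding f_def by (rule ennreal_leI)
  qed
  have sup: "(SUP N. f N y) = ennreal (\<bar>y\<bar> * (exp (- V1 y) * v y))" for y
  proof (rule antisym)
    show "(SUP N. f N y) \<le> ennreal (\<bar>y\<bar> * (exp (- V1 y) * v y))"
    proof (rule SUP_least)
      fix N :: nat
      have "min \<bar>y\<bar> (real N) * (exp (- V1 y) * v y) \<le> \<bar>y\<bar> * (exp (- V1 y) * v y)"
        using vpos[of y] by (intro mult_right_mono) auto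
      then show "f N y \<le> ennreal (\<bar>y\<bar> * (exp (- V1 y) * v y))" unfolding f_def by (rule ennreal_leI)
    qed
    have "f (nat \<lceil>\<bar>y\<bar>\<rceil>) y = ennreal (\<bar>y\<bar> * (exp (- V1 y) * v y))"
      unfolding f_def by (simp add: min_def)
    then show "ennreal (\<bar>y\<bar> * (exp (- V1 y) * v y)) \<le> (SUP N. f N y)"
      by (metis UNIV_I SUP_upper)
  qed
  have "(\<integral>\<^sup>+y. ennreal (\<bar>y\<bar> * (exp (- V1 y) * v y)) \<partial>lborel) = (\<integral>\<^sup>+y. (SUP N. f N y) \<partial>lborel)"
    by (simp add: sup)
  also have "\<dots> = (SUP N. integral\<^sup>N lborel (f N))"
    by (rule nn_integral_monotone_convergence_SUP[OF inc]) (unfold f_def, measurable)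
  also have "\<dots> \<le> ennreal M" using M unfolding f_def by (auto intro: SUP_least)
  finally show ?thesis by blast
qed

end



context dsetup begin

lemma int_pos:
  assumes "a < b"
  shows "0 < (\<integral>\<^sup>+y. indicator {a..b} y * ennreal (exp (- Cg) * (exp (- V1 y) * v y)) \<partial>lborel)"
proof (rule ccontr)
  assume "\<not> ?thesis"
  then have "(\<integral>\<^sup>+y. indicator {a..b} y * ennreal (exp (- Cg) * (exp (- V1 y) * v y)) \<partial>lborel) = 0"
    by (simp add: not_less)
  then have "AE y in lborel. indicator {a..b} y * ennreal (exp (- Cg) * (exp (- V1 y) * v y)) = 0"
    by (subst (asm) nn_integral_0_iff_AE) auto
  moreover have "{y \<in> space lborel. \<not> (indicator {a..b} y * ennreal (exp (- Cg) * (exp (- V1 y) * v y)) = 0)} = {a..b}"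
    using vpos by (auto simp: indicator_def ennreal_eq_0_iff not_le)
  ultimately have "emeasure lborel {a..b} = 0"
    by (subst (asm) AE_iff_measurable) auto
  then show False using assms by simp
qed

lemma v_low_interval: "\<exists>m>0. \<forall>x. a \<le> x \<and> x \<le> a + \<gamma> \<longrightarrow> m \<le> v x"
proof -
  define P where "P = (\<integral>\<^sup>+y. indicator {a..a+\<gamma>} y * ennreal (exp (- Cg) * (exp (- V1 y) * v y)) \<partial>lborel)"
  have P0: "0 < P" unfolding P_def using gpos by (intro int_pos) simp
  have "P \<le> (\<integral>\<^sup>+y. ennreal (exp (- Cg)) * ennreal (exp (- V1 y) * v y) \<partial>lborel)"
    unfolding P_def using vpos
    by (intro nn_integral_mono) (auto simp: indicator_def ennreal_mult less_imp_le)
  also have "\<dots> = ennreal (exp (- Cg)) * ennreal Hn" by (subst nn_integral_cmult) (auto simp: Hn)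
  also have "\<dots> < \<infinity>" by (simp add: ennreal_mult_less_top)
  finally have Pfin: "P < \<infinity>" .
  then obtain p where p: "P = ennreal p" "p \<ge> 0" by (cases P) auto
  have pp: "p > 0" using P0 p by simp
  have "p / lam \<le> v x" if x: "a \<le> x" "x \<le> a + \<gamma>" for x
  proof -
    have "P \<le> (\<integral>\<^sup>+y. ennreal (exp (- V1 y) * exp (- V2 (y - x)) * v y) \<partial>lborel)"
      unfolding P_def
    proof (rule nn_integral_mono)
      fix y
      show "indicator {a..a+\<gamma>} y * ennreal (exp (- Cg) * (exp (- V1 y) * v y)) \<le> ennreal (exp (- V1 y) * exp (- V2 (y - x)) * v y)"
      proof (cases "y \<in> {a..a+\<gamma>}")
        case True
        then have "y - x \<in> {-\<gamma>..\<gamma>}" using x by auto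
        then have "V2 (y - x) \<le> Cg" by (rule Cg)
        then have "exp (- Cg) \<le> exp (- V2 (y - x))" by simp
        then have "exp (- Cg) * (exp (- V1 y) * v y) \<le> exp (- V2 (y - x)) * (exp (- V1 y) * v y)"
          using vpos[of y] by (intro mult_right_mono) auto
        then show ?thesis using True by (simp add: ennreal_leI mult_ac)
      qed simp
    qed
    also have "\<dots> = ennreal (lam * v x)" by (simp add: eig)
    finally have "p \<le> lam * v x" using p lampos vpos[of x] by (simp add: ennreal_le_iff)
    then show ?thesis using lampos by (simp add: field_simps)
  qed
  then show ?thesis using pp lampos by (intro exI[of _ "p / lam"]) auto
qed

lemma v_low_k: "\<exists>m>0. \<forall>x. \<bar>x\<bar> \<le> real k * \<gamma> \<longrightarrow> m \<le> v x"
proof (induction k)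
  case 0
  then show ?case using vpos[of 0] by (intro exI[of _ "v 0"]) auto
next
  case (Suc k)
  then obtain m where m: "m > 0" "\<And>x. \<bar>x\<bar> \<le> real k * \<gamma> \<Longrightarrow> m \<le> v x" by blast
  obtain m1 where m1: "m1 > 0" "\<And>x. real k * \<gamma> \<le> x \<and> x \<le> real k * \<gamma> + \<gamma> \<Longrightarrow> m1 \<le> v x"
    using v_low_interval[of "real k * \<gamma>"] by blast
  obtain m2 where m2: "m2 > 0" "\<And>x. - (real k * \<gamma>) - \<gamma> \<le> x \<and> x \<le> - (real k * \<gamma>) - \<gamma> + \<gamma> \<Longrightarrow> m2 \<le> v x"
    using v_low_interval[of "- (real k * \<gamma>) - \<gamma>"] by blast
  have "min m (min m1 m2) \<le> v x" if "\<bar>x\<bar> \<le> real (Suc k) * \<gamma>" for x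
  proof -
    have xb: "\<bar>x\<bar> \<le> real k * \<gamma> + \<gamma>" using that by (simp add: distrib_right)
    consider "\<bar>x\<bar> \<le> real k * \<gamma>" | "real k * \<gamma> \<le> x" | "x \<le> - (real k * \<gamma>)" by linarith
    then show ?thesis
    proof cases
      case 1 then show ?thesis using m(2)[OF 1] by simp
    next
      case 2 then have "m1 \<le> v x" using xb by (intro m1(2)) auto
      then show ?thesis by simp
    next
      case 3 then have "m2 \<le> v x" using xb by (intro m2(2)) auto
      then show ?thesis by simp
    qed
  qed
  then show ?case using m m1 m2 by (intro exI[of _ "min m (min m1 m2)"]) auto
qed

lemma v_low: "\<exists>m>0. \<forall>x. \<bar>x\<bar> \<le> R \<longrightarrow> m \<le> v x"
proof -
  obtain k :: nat where "R / \<gamma> \<le> real k" using real_arch_simple by blast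
  then have "R \<le> real k * \<gamma>" using gpos by (simp add: field_simps)
  then show ?thesis using v_low_k[of k] by (meson order_trans)
qed

end



lemma ce_mono: "(\<And>y. f y \<le> g y) \<Longrightarrow> chain_expect p n f x \<le> chain_expect p n g x"
proof (induction n arbitrary: x)
  case 0 then show ?case by simp
next
  case (Suc n) then show ?case by (auto intro!: nn_integral_mono mult_left_mono)
qed

lemma ce_drift:
  fixes F :: "real \<Rightarrow> real"
  assumes pm: "\<And>x. (\<lambda>y. ennreal (p x y)) \<in> borel_measurable borel"
    and Fm: "F \<in> borel_measurable borel" and F0: "\<And>y. F y \<ge> 0"
    and tot: "\<And>x. (\<integral>\<^sup>+y. ennreal (p x y) \<partial>lborel) = 1"
    and dr: "\<And>x. (\<integral>\<^sup>+y. ennreal (p x y) * ennreal (F y) \<partial>lborel) \<le> ennreal (c * F x + B)"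
    and c: "0 \<le> c" and B: "0 \<le> B"
  shows "chain_expect p n (\<lambda>y. ennreal (F y)) x \<le> ennreal (c ^ n * F x + B * (\<Sum>i<n. c ^ i))"
proof (induction n arbitrary: x)
  case 0 then show ?case by simp
next
  case (Suc n)
  define S where "S = B * (\<Sum>i<n. c ^ i)"
  have S: "S \<ge> 0" unfolding S_def using B c by (simp add: sum_nonneg)
  have "chain_expect p (Suc n) (\<lambda>y. ennreal (F y)) x =
     (\<integral>\<^sup>+y. ennreal (p x y) * chain_expect p n (\<lambda>y. ennreal (F y)) y \<partial>lborel)" by simp
  also have "\<dots> \<le> (\<integral>\<^sup>+y. ennreal (p x y) * ennreal (c ^ n * F y + S) \<partial>lborel)"
    using Suc unfolding S_def by (intro nn_integral_mono mult_left_mono) auto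
  also have "\<dots> = (\<integral>\<^sup>+y. ennreal (c ^ n) * (ennreal (p x y) * ennreal (F y)) + ennreal S * ennreal (p x y) \<partial>lborel)"
  proof (rule nn_integral_cong)
    fix y
    have "ennreal (c ^ n * F y + S) = ennreal (c ^ n) * ennreal (F y) + ennreal S"
      using c F0[of y] S by (simp add: ennreal_mult ennreal_plus)
    then show "ennreal (p x y) * ennreal (c ^ n * F y + S) = ennreal (c ^ n) * (ennreal (p x y) * ennreal (F y)) + ennreal S * ennreal (p x y)"
      by (simp add: distrib_left mult_ac)
  qed
  also have "\<dots> = ennreal (c ^ n) * (\<integral>\<^sup>+y. ennreal (p x y) * ennreal (F y) \<partial>lborel) + ennreal S * (\<integral>\<^sup>+y. ennreal (p x y) \<partial>lborel)"
    using pm[of x] Fm by (simp add: nn_integral_add nn_integral_cmult)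
  also have "\<dots> \<le> ennreal (c ^ n) * ennreal (c * F x + B) + ennreal S"
    using dr[of x] tot[of x] by (simp add: mult_left_mono)
  also have "\<dots> = ennreal (c ^ Suc n * F x + B * (\<Sum>i<Suc n. c ^ i))"
  proof -
    have "c ^ n * (c * F x + B) + S = c ^ Suc n * F x + B * (\<Sum>i<Suc n. c ^ i)"
      unfolding S_def by (simp add: algebra_simps)
    moreover have "ennreal (c ^ n) * ennreal (c * F x + B) + ennreal S = ennreal (c ^ n * (c * F x + B) + S)"
      using c F0[of x] B S by (simp add: ennreal_mult ennreal_plus)
    ultimately show ?thesis by simp
  qed
  finally show ?case .
qed

lemma ce_drift':
  fixes F :: "real \<Rightarrow> real"
  assumes pm: "\<And>x. (\<lambda>y. ennreal (p x y)) \<in> borel_measurable borel"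
    and Fm: "F \<in> borel_measurable borel" and F0: "\<And>y. F y \<ge> 0"
    and tot: "\<And>x. (\<integral>\<^sup>+y. ennreal (p x y) \<partial>lborel) = 1"
    and dr: "\<And>x. (\<integral>\<^sup>+y. ennreal (p x y) * ennreal (F y) \<partial>lborel) \<le> ennreal (c * F x + B)"
    and c: "0 \<le> c" "c < 1" and B: "0 \<le> B"
  shows "chain_expect p n (\<lambda>y. ennreal (F y)) x \<le> ennreal (F x + B / (1 - c))"
proof -
  have "chain_expect p n (\<lambda>y. ennreal (F y)) x \<le> ennreal (c ^ n * F x + B * (\<Sum>i<n. c ^ i))"
    by (rule ce_drift[OF pm Fm F0 tot dr c(1) B])
  also have "c ^ n * F x + B * (\<Sum>i<n. c ^ i) \<le> F x + B / (1 - c)"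
  proof -
    have "c ^ n \<le> 1" using c by (simp add: power_le_one)
    then have "c ^ n * F x \<le> F x" using F0[of x] by (metis mult_left_le_one_le c(1) zero_le_power)
    moreover have "(\<Sum>i<n. c ^ i) \<le> 1 / (1 - c)"
    proof -
      have "(\<Sum>i<n. c ^ i) = (1 - c ^ n) / (1 - c)" using c by (simp add: sum_gp_strict)
      also have "\<dots> \<le> 1 / (1 - c)" using c by (intro divide_right_mono) auto
      finally show ?thesis .
    qed
    then have "B * (\<Sum>i<n. c ^ i) \<le> B / (1 - c)" using B by (simp add: mult_left_mono divide_inverse)
    ultimately show ?thesis by simp
  qed
  then have "ennreal (c ^ n * F x + B * (\<Sum>i<n. c ^ i)) \<le> ennreal (F x + B / (1 - c))" by (rule ennreal_leI)
  finally show ?thesis .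
qed




context dsetup begin

lemma main_bound: "\<exists>C>0. \<forall>n.
     chain_expect (\<lambda>x y. exp (- V1 y - V2 (y - x)) * v y / (lam * v x)) n (\<lambda>y. ennreal \<bar>y\<bar>) 0 \<le> ennreal C
   \<and> chain_expect (\<lambda>x y. exp (- V1 y - V2 (y - x)) * v y / (lam * v x)) n (\<lambda>y. ennreal (1 / v y)) 0 \<le> ennreal C"
proof -
  define p where "p x y = exp (- V1 y - V2 (y - x)) * v y / (lam * v x)" for x y
  obtain MI0 where MI0: "(\<integral>\<^sup>+y. ennreal (\<bar>y\<bar> * (exp (- V1 y) * v y)) \<partial>lborel) \<le> ennreal MI0"
    using I_fin by blast
  define MI where "MI = max MI0 0"
  have MI: "(\<integral>\<^sup>+y. ennreal (\<bar>y\<bar> * (exp (- V1 y) * v y)) \<partial>lborel) \<le> ennreal MI" "MI \<ge> 0"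
    using MI0 unfolding MI_def by (auto intro: order_trans ennreal_leI)
  obtain R where R: "R > 0" and RQ: "\<And>x. R \<le> \<bar>x\<bar> \<Longrightarrow>
     (\<integral>\<^sup>+y. ennreal (exp (- V1 y) * exp (- V2 (y - x))) \<partial>lborel) \<le> ennreal (lam / 2)"
    using Q_small by blast
  obtain m where m: "m > 0" "\<And>x. \<bar>x\<bar> \<le> R \<Longrightarrow> m \<le> v x" using v_low[of R] by blast
  define E1 where "E1 = exp (- c1)"
  define E2 where "E2 = exp (- c2)"
  have E: "E1 > 0" "E2 > 0" unfolding E1_def E2_def by auto
  define D where "D = 4 * E2 * MI / lam + 4"
  have D4: "D / 4 = E2 * MI / lam + 1" unfolding D_def by simp
  have D: "D \<ge> 4" "E2 * MI / lam \<le> D / 4" using D4 E MI(2) lampos by auto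
  define B' where "B' = (E2 * MI + D * E1 * Gb) / (lam * m)"
  have B': "B' \<ge> 0" unfolding B'_def using E MI(2) D Gb(2) lampos m by auto
  define F where "F y = \<bar>y\<bar> + D / v y" for y
  have F0: "F y \<ge> 0" for y unfolding F_def using D vpos[of y] by simp
  have pm: "(\<lambda>y. ennreal (p x y)) \<in> borel_measurable borel" for x unfolding p_def by measurable
  have Fm: "F \<in> borel_measurable borel" unfolding F_def by measurable
  have pe: "ennreal (p x y) = ennreal (1 / (lam * v x)) * ennreal (exp (- V1 y) * exp (- V2 (y - x)) * v y)" for x y
  proof -
    have "p x y = 1 / (lam * v x) * (exp (- V1 y) * exp (- V2 (y - x)) * v y)"
      unfolding p_def by (simp add: exp_diff exp_minus field_simps)
    moreover have hA: "0 \<le> 1 / (lam * v x)" using lampos vpos[of x] by simp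
    moreover have hB: "0 \<le> exp (- V1 y) * exp (- V2 (y - x)) * v y" using vpos[of y] by simp
    ultimately show ?thesis by (simp only: ennreal_mult[OF hA hB])
  qed
  have tot: "(\<integral>\<^sup>+y. ennreal (p x y) \<partial>lborel) = 1" for x
  proof -
    have "(\<integral>\<^sup>+y. ennreal (p x y) \<partial>lborel) = ennreal (1 / (lam * v x)) * ennreal (lam * v x)"
      unfolding pe by (subst nn_integral_cmult) (auto simp: eig)
    also have "\<dots> = ennreal (1 / (lam * v x) * (lam * v x))"
      using lampos vpos[of x] by (intro ennreal_mult[symmetric]) auto
    also have "\<dots> = 1" using lampos vpos[of x] by simp
    finally show ?thesis .
  qed
  have dr: "(\<integral>\<^sup>+y. ennreal (p x y) * ennreal (F y) \<partial>lborel) \<le> ennreal (3/4 * F x + B')" for x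
  proof -
    define K1 where "K1 = E2 / (lam * v x)"
    define K2 where "K2 = D / (lam * v x)"
    have K: "K1 \<ge> 0" "K2 \<ge> 0" unfolding K1_def K2_def using E D lampos vpos[of x] by auto
    define Qv where "Qv = (if R \<le> \<bar>x\<bar> then lam / 2 else E1 * Gb)"
    have Qv: "Qv \<ge> 0" unfolding Qv_def using lampos E Gb(2) by auto
    have "(\<integral>\<^sup>+y. ennreal (p x y) * ennreal (F y) \<partial>lborel) \<le>
      (\<integral>\<^sup>+y. ennreal (K1 * (\<bar>y\<bar> * (exp (- V1 y) * v y)) + K2 * (exp (- V1 y) * exp (- V2 (y - x)))) \<partial>lborel)"
    proof (rule nn_integral_mono)
      fix y
      have "p x y * F y = exp (- V2 (y - x)) / (lam * v x) * (\<bar>y\<bar> * (exp (- V1 y) * v y)) + K2 * (exp (- V1 y) * exp (- V2 (y - x)))"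
        unfolding p_def F_def K2_def using vpos[of y] vpos[of x] lampos
        by (simp add: exp_diff exp_minus field_simps)
      also have "\<dots> \<le> K1 * (\<bar>y\<bar> * (exp (- V1 y) * v y)) + K2 * (exp (- V1 y) * exp (- V2 (y - x)))"
        unfolding K1_def E2_def using vpos[of y] vpos[of x] lampos b_le[of "y - x"]
        by (intro add_right_mono mult_right_mono divide_right_mono) auto
      finally have "p x y * F y \<le> K1 * (\<bar>y\<bar> * (exp (- V1 y) * v y)) + K2 * (exp (- V1 y) * exp (- V2 (y - x)))" .
      moreover have "p x y \<ge> 0" unfolding p_def using vpos[of x] vpos[of y] lampos by simp
      ultimately show "ennreal (p x y) * ennreal (F y) \<le> ennreal (K1 * (\<bar>y\<bar> * (exp (- V1 y) * v y)) + K2 * (exp (- V1 y) * exp (- V2 (y - x))))"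
        using F0[of y] by (subst ennreal_mult[symmetric]) (auto intro: ennreal_leI)
    qed
    also have "\<dots> = ennreal K1 * (\<integral>\<^sup>+y. ennreal (\<bar>y\<bar> * (exp (- V1 y) * v y)) \<partial>lborel)
       + ennreal K2 * (\<integral>\<^sup>+y. ennreal (exp (- V1 y) * exp (- V2 (y - x))) \<partial>lborel)"
    proof (rule nn_lin2)
      show "0 \<le> \<bar>y\<bar> * (exp (- V1 y) * v y)" for y using vpos[of y] by simp
    qed (use K in auto)
    also have "\<dots> \<le> ennreal K1 * ennreal MI + ennreal K2 * ennreal Qv"
    proof (intro add_mono mult_left_mono)
      show "(\<integral>\<^sup>+y. ennreal (exp (- V1 y) * exp (- V2 (y - x))) \<partial>lborel) \<le> ennreal Qv"
        unfolding Qv_def using RQ Q1_bound[of x] unfolding E1_def by auto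
    qed (use MI in auto)
    also have "\<dots> = ennreal (K1 * MI + K2 * Qv)"
      using K MI(2) Qv by (simp add: ennreal_mult ennreal_plus)
    also have "\<dots> \<le> ennreal (3/4 * F x + B')"
    proof (rule ennreal_leI)
      show "K1 * MI + K2 * Qv \<le> 3/4 * F x + B'"
      proof (cases "R \<le> \<bar>x\<bar>")
        case True
        have "K1 * MI + K2 * Qv = (E2 * MI / lam + D / 2) / v x"
          unfolding K1_def K2_def Qv_def using True lampos vpos[of x] by (simp add: field_simps)
        also have "\<dots> \<le> (3/4 * D) / v x" using D(2) vpos[of x] by (intro divide_right_mono) auto
        also have "\<dots> \<le> 3/4 * F x" unfolding F_def by simp
        finally show ?thesis using B' by simp
      next
        case False
        have "K1 * MI + K2 * Qv = (E2 * MI + D * E1 * Gb) / (lam * v x)"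
          unfolding K1_def K2_def Qv_def using False lampos vpos[of x] by (simp add: field_simps)
        also have "\<dots> \<le> B'" unfolding B'_def
          using m(1) m(2)[of x] False lampos E MI(2) D Gb(2)
          by (intro divide_left_mono mult_left_mono) auto
        finally show ?thesis using F0[of x] by simp
      qed
    qed
    finally show ?thesis .
  qed
  have main: "chain_expect p n (\<lambda>y. ennreal (F y)) 0 \<le> ennreal (F 0 + B' / (1 - 3/4))" for n
    by (rule ce_drift'[OF pm Fm F0 tot dr]) (use B' in auto)
  have "chain_expect p n (\<lambda>y. ennreal \<bar>y\<bar>) 0 \<le> ennreal (F 0 + B' / (1 - 3/4))
      \<and> chain_expect p n (\<lambda>y. ennreal (1 / v y)) 0 \<le> ennreal (F 0 + B' / (1 - 3/4))" for n
  proof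
    have "chain_expect p n (\<lambda>y. ennreal \<bar>y\<bar>) 0 \<le> chain_expect p n (\<lambda>y. ennreal (F y)) 0"
    proof (rule ce_mono, rule ennreal_leI)
      fix y
      have "0 \<le> D / v y" using D(1) vpos[of y] by simp
      then show "\<bar>y\<bar> \<le> F y" unfolding F_def by simp
    qed
    then show "chain_expect p n (\<lambda>y. ennreal \<bar>y\<bar>) 0 \<le> ennreal (F 0 + B' / (1 - 3/4))" using main[of n] by simp
  next
    have "chain_expect p n (\<lambda>y. ennreal (1 / v y)) 0 \<le> chain_expect p n (\<lambda>y. ennreal (F y)) 0"
    proof (rule ce_mono, rule ennreal_leI)
      fix y
      have "1 / v y \<le> D / v y" using D vpos[of y] by (intro divide_right_mono) auto
      then show "1 / v y \<le> F y" unfolding F_def by simp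
    qed
    then show "chain_expect p n (\<lambda>y. ennreal (1 / v y)) 0 \<le> ennreal (F 0 + B' / (1 - 3/4))" using main[of n] by simp
  qed
  moreover have "F 0 + B' / (1 - 3/4) > 0"
  proof -
    have "0 < D / v 0" using D(1) vpos[of 0] by simp
    then show ?thesis unfolding F_def using B' by simp
  qed
  ultimately show ?thesis unfolding p_def by blast
qed

end

theorem proposition2p3:
  fixes V1 V2 v :: "real \<Rightarrow> real" and lam \<gamma> :: real
  assumes V1_meas: "V1 \<in> borel_measurable borel"
    and V1_below: "\<exists>c. \<forall>x. c \<le> V1 x"
    and V1_sym: "\<forall>x. V1 (- x) = V1 x"
    and V1_inf: "filterlim V1 at_top at_infinity"
    and V1_int: "integrable lborel (\<lambda>x. exp (- 2 * V1 x))"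
    and V2_meas: "V2 \<in> borel_measurable borel"
    and V2_below: "\<exists>c. \<forall>x. c \<le> V2 x"
    and gamma_pos: "\<gamma> > 0"
    and V2_above: "\<exists>c. \<forall>x\<in>{-\<gamma>..\<gamma>}. V2 x \<le> c"
    and V2_int: "integrable lborel (\<lambda>x. \<bar>x\<bar> * exp (- V2 x))"
    and lam_pos: "lam > 0"
    and lam_def: "lam = spectral_radius_L2 (kernel_op (\<lambda>x y. exp (- V1 y - V2 (y - x))))"
    and v_L2: "L2 v"
    and v_pos: "\<forall>x. v x > 0"
    and v_eig: "\<forall>x. v x = (1 / lam) * (\<integral>y. exp (- V1 y - V2 (y - x)) * v y \<partial>lborel)"
  shows "\<exists>C::real. 0 < C \<and> (\<forall>n::nat.
     chain_expect (\<lambda>x y. exp (- V1 y - V2 (y - x)) * v y / (lam * v x)) n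
        (\<lambda>y. ennreal \<bar>y\<bar>) 0 \<le> ennreal C
   \<and> chain_expect (\<lambda>x y. exp (- V1 y - V2 (y - x)) * v y / (lam * v x)) n
        (\<lambda>y. ennreal (1 / v y)) 0 \<le> ennreal C)"
proof -
  obtain c1 where c1: "\<And>x. c1 \<le> V1 x" using V1_below by blast
  obtain c2 where c2: "\<And>x. c2 \<le> V2 x" using V2_below by blast
  obtain Cg where Cg: "\<And>x. x \<in> {-\<gamma>..\<gamma>} \<Longrightarrow> V2 x \<le> Cg" using V2_above by blast
  have vm: "v \<in> borel_measurable borel" "integrable lborel (\<lambda>x. (v x)\<^sup>2)"
    using v_L2 unfolding L2_def by auto
  interpret dsetup V1 V2 v lam \<gamma> c1 c2 Cg
  proof (unfold_locales)
    show "\<And>x. v x = 1 / lam * (\<integral>y. exp (- V1 y - V2 (y - x)) * v y \<partial>lborel)"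
      using v_eig by blast
    show "\<And>x. 0 < v x" using v_pos by blast
  qed (fact | rule c1 c2 Cg vm)+
  show ?thesis using main_bound by blast
qed


end
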